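(* Let $k\ge1$, let $a_1,\ldots,a_k$ be positive integers, let $\theta=(\theta_1,\ldots,\theta_k)$ be a $k$-tuple of nonnegative integers, and let $r$ be an integer. Then the residue mod $2$ of $$\sum_{B}\prod_{i=1}^k\binom{a_i+b_i-2}{b_i},$$ where $B=(b_1,\ldots,b_k)$ ranges over all $k$-tuples of nonnegative integers with $b_1+\cdots+b_k=k-r$ and $B+\theta\in\mathcal{S}_k$, depends only on the residues $a_i\bmod 2^{\lg(2i)}$, $i=1,\ldots,k$.
   Context: $\mathcal{S}_k$ is the set of $k$-tuples of nonnegative integers such that, for every $j$, the sum of the first $j$ components is $\le j$. $\lg(x)=\lfloor\log_2x\rfloor$. Binomial coefficients are $\binom{x}{b}=x(x-1)\cdots(x-b+1)/b!$ for integer $x$ and $b\ge0$ (so $\binom{-1}{0}=1$). (This sum is the formula, due to earlier work of the author, for $\phi(R^{m-r}V_{j_1}\cdots V_{j_r})$ in the top cohomology of a planar polygon space with a single gene $\{m+3,g_1,\ldots,g_k\}$, $a_i=g_i-g_{i+1}$, $\theta=\theta(\{j_1,\ldots,j_r\})$.) *)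

theory Defs
  imports Complex_Main "HOL-Library.Discrete_Functions"
begin

definition lg :: "nat \<Rightarrow> nat" where
  "lg x = floor_log x"

definition S :: "nat \<Rightarrow> (nat \<Rightarrow> nat) set" where
  "S k = {c. (\<forall>i. i \<notin> {1..k} \<longrightarrow> c i = 0) \<and> (\<forall>j\<in>{1..k}. (\<Sum>i=1..j. c i) \<le> j)}"

definition ibinom :: "int \<Rightarrow> nat \<Rightarrow> int" where
  "ibinom x b = (\<Prod>j<b. x - int j) div fact b"

definition csum :: "nat \<Rightarrow> (nat \<Rightarrow> nat) \<Rightarrow> int \<Rightarrow> (nat \<Rightarrow> nat) \<Rightarrow> int" where
  "csum k \<theta> r a =
     (\<Sum>B\<in>{B. (\<forall>i. i \<notin> {1..k} \<longrightarrow> B i = 0) \<and> int (\<Sum>i=1..k. B i) = int k - r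
             \<and> (\<lambda>i. B i + \<theta> i) \<in> S k}.
        \<Prod>i=1..k. ibinom (int (a i) + int (B i) - 2) (B i))"

end

theory Submission
  imports Defs
begin

lemma even_choose_pow2:
  assumes "0 < j" "j < 2 ^ m"
  shows "2 dvd ((2::nat) ^ m choose j)"
proof (rule ccontr)
  assume o: "\<not> 2 dvd ((2::nat) ^ m choose j)"
  have "j * (2 ^ m choose j) = 2 ^ m * ((2 ^ m - 1) choose (j - 1))"
    using times_binomial_minus1_eq[OF assms(1)] by simp
  hence d: "(2::nat) ^ m dvd j * (2 ^ m choose j)" by simp
  have "coprime ((2::nat) ^ m) (2 ^ m choose j)"
    using o by (simp add: coprime_commute)
  hence "(2::nat) ^ m dvd j" using d coprime_dvd_mult_left_iff by blast
  thus False using assms by (simp add: nat_dvd_not_less)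
qed

lemma choose_shift:
  assumes "b < 2 ^ m"
  shows "((n + 2 ^ m) choose b) mod 2 = (n choose b) mod (2::nat)"
proof -
  have "((2 ^ m + n) choose b) = (\<Sum>k\<le>b. (2 ^ m choose k) * (n choose (b - k)))"
    by (rule vandermonde[symmetric])
  also have "\<dots> = (n choose b) + (\<Sum>k\<in>{1..b}. (2 ^ m choose k) * (n choose (b - k)))"
  proof -
    have "{..b} = insert 0 {1..b}" by auto
    thus ?thesis by simp
  qed
  finally have e: "((n + 2 ^ m) choose b) = (n choose b) + (\<Sum>k\<in>{1..b}. (2 ^ m choose k) * (n choose (b - k)))"
    by (simp add: add.commute)
  have "2 dvd (\<Sum>k\<in>{1..b}. (2 ^ m choose k) * (n choose (b - k)))"
    using assms by (intro dvd_sum) (auto intro!: dvd_mult2 even_choose_pow2)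
  thus ?thesis using e by auto
qed

lemma choose_shift_mult:
  assumes "b < 2 ^ m"
  shows "((n + t * 2 ^ m) choose b) mod 2 = (n choose b) mod (2::nat)"
proof (induction t)
  case (Suc t)
  have "((n + Suc t * 2 ^ m) choose b) = ((n + t * 2 ^ m) + 2 ^ m) choose b"
    by (simp add: algebra_simps)
  thus ?case using choose_shift[OF assms, of "n + t * 2 ^ m"] Suc by simp
qed simp

lemma choose_mod_cong:
  assumes "b < 2 ^ m" "n mod 2 ^ m = n' mod 2 ^ m"
  shows "(n choose b) mod 2 = (n' choose b) mod (2::nat)"
proof -
  have "(n choose b) mod 2 = ((n mod 2 ^ m + (n div 2 ^ m) * 2 ^ m) choose b) mod 2"
    by (simp only: mod_div_mult_eq)
  also have "\<dots> = ((n mod 2 ^ m) choose b) mod 2"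
    by (rule choose_shift_mult[OF assms(1)])
  also have "\<dots> = ((n' mod 2 ^ m) choose b) mod 2" using assms(2) by simp
  also have "\<dots> = ((n' mod 2 ^ m + (n' div 2 ^ m) * 2 ^ m) choose b) mod 2"
    by (rule choose_shift_mult[OF assms(1), symmetric])
  also have "\<dots> = (n' choose b) mod 2" by (simp only: mod_div_mult_eq)
  finally show ?thesis .
qed

lemma ibinom_nat: "ibinom (int n) b = int (n choose b)"
proof -
  have "real_of_int (\<Prod>j<b. int n - int j) = (\<Prod>j<b. real n - real j)" by simp
  also have "\<dots> = (\<Prod>j=0..<b. real n - of_nat j)" by (simp add: lessThan_atLeast0)
  also have "\<dots> = fact b * (real n gchoose b)" by (rule gbinomial_mult_fact[symmetric])
  also have "\<dots> = real_of_int (fact b * int (n choose b))"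
    by (simp add: binomial_gbinomial[symmetric])
  finally have "(\<Prod>j<b. int n - int j) = fact b * int (n choose b)"
    using of_int_eq_iff by blast
  thus ?thesis unfolding ibinom_def by simp
qed

lemma ibinom_0: "ibinom x 0 = 1"
  unfolding ibinom_def by simp

lemma factor_cong:
  assumes "b < 2 ^ m" "(a::nat) > 0" "a' > 0" "a mod 2 ^ m = a' mod 2 ^ m"
  shows "ibinom (int a + int b - 2) b mod 2 = ibinom (int a' + int b - 2) b mod 2"
proof (cases "b = 0")
  case True thus ?thesis by (simp add: ibinom_0)
next
  case False
  have e1: "int a + int b - 2 = int (a + b - 2)" "int a' + int b - 2 = int (a' + b - 2)"
    using False assms by auto
  have "int a mod 2 ^ m = int a' mod 2 ^ m"
    using arg_cong[OF assms(4), of int] by (simp add: zmod_int)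
  hence "(int a + int b - 2) mod 2 ^ m = (int a' + int b - 2) mod 2 ^ m"
    by (intro mod_diff_cong mod_add_cong) auto
  hence "int ((a + b - 2) mod 2 ^ m) = int ((a' + b - 2) mod 2 ^ m)"
    unfolding e1 by (simp add: of_nat_mod)
  hence "(a + b - 2) mod 2 ^ m = (a' + b - 2) mod 2 ^ m" by simp
  from choose_mod_cong[OF assms(1) this]
  have "int (((a + b - 2) choose b) mod 2) = int (((a' + b - 2) choose b) mod 2)" by simp
  thus ?thesis unfolding e1 ibinom_nat by (simp add: of_nat_mod)
qed

theorem corollary4p3:
  fixes k :: nat and \<theta> :: "nat \<Rightarrow> nat" and r :: int
  assumes "k \<ge> 1"
    and "\<forall>i. i \<notin> {1..k} \<longrightarrow> \<theta> i = 0"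
  shows "\<forall>a a' :: nat \<Rightarrow> nat.
           (\<forall>i\<in>{1..k}. a i > 0 \<and> a' i > 0 \<and> a i mod 2 ^ lg (2 * i) = a' i mod 2 ^ lg (2 * i))
           \<longrightarrow> csum k \<theta> r a mod 2 = csum k \<theta> r a' mod 2"
proof (intro allI impI)
  fix a a' :: "nat \<Rightarrow> nat"
  assume H: "\<forall>i\<in>{1..k}. a i > 0 \<and> a' i > 0 \<and> a i mod 2 ^ lg (2 * i) = a' i mod 2 ^ lg (2 * i)"
  define I where "I = {B. (\<forall>i. i \<notin> {1..k} \<longrightarrow> B i = 0) \<and> int (\<Sum>i=1..k. B i) = int k - r
             \<and> (\<lambda>i. B i + \<theta> i) \<in> S k}"
  have P: "(\<Prod>i=1..k. ibinom (int (a i) + int (B i) - 2) (B i)) mod 2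
         = (\<Prod>i=1..k. ibinom (int (a' i) + int (B i) - 2) (B i)) mod 2" if B: "B \<in> I" for B
  proof -
    have f: "ibinom (int (a i) + int (B i) - 2) (B i) mod 2
           = ibinom (int (a' i) + int (B i) - 2) (B i) mod 2" if i: "i \<in> {1..k}" for i
    proof -
      have "(\<lambda>i. B i + \<theta> i) \<in> S k" using B unfolding I_def by blast
      hence "\<forall>j\<in>{1..k}. (\<Sum>l=1..j. B l + \<theta> l) \<le> j" unfolding S_def by blast
      hence "(\<Sum>l=1..i. B l + \<theta> l) \<le> i" using i by blast
      moreover have "B i \<le> (\<Sum>l=1..i. B l + \<theta> l)"
      proof -
        have "B i \<le> B i + \<theta> i" by simp
        also have "\<dots> \<le> (\<Sum>l=1..i. B l + \<theta> l)"
          using i by (intro member_le_sum) auto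
        finally show ?thesis .
      qed
      ultimately have "B i \<le> i" by linarith
      moreover have "i < 2 ^ lg (2 * i)"
        using i floor_log_exp2_gt[of i] by (simp add: lg_def)
      ultimately have "B i < 2 ^ lg (2 * i)" by linarith
      thus ?thesis using H i factor_cong by blast
    qed
    have "(\<Prod>i=1..k. ibinom (int (a i) + int (B i) - 2) (B i) mod 2)
         = (\<Prod>i=1..k. ibinom (int (a' i) + int (B i) - 2) (B i) mod 2)"
      by (rule prod.cong) (simp_all add: f)
    thus ?thesis by (metis (no_types) mod_prod_eq)
  qed
  have "csum k \<theta> r a mod 2 = (\<Sum>B\<in>I. (\<Prod>i=1..k. ibinom (int (a i) + int (B i) - 2) (B i)) mod 2) mod 2"
    unfolding csum_def I_def[symmetric] by (rule mod_sum_eq[symmetric])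
  also have "\<dots> = (\<Sum>B\<in>I. (\<Prod>i=1..k. ibinom (int (a' i) + int (B i) - 2) (B i)) mod 2) mod 2"
    by (rule arg_cong[where f="\<lambda>x. x mod 2"], rule sum.cong) (rule refl, rule P)
  also have "\<dots> = csum k \<theta> r a' mod 2"
    unfolding csum_def I_def[symmetric] by (rule mod_sum_eq)
  finally show "csum k \<theta> r a mod 2 = csum k \<theta> r a' mod 2" .
qed

end
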